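(* Let $k\ge3$ and let $\Gamma=(X,E)$ be a finite set-homogeneous $k$-hypergraph. Then $\mathrm{Aut}(\Gamma)$ acts 2-transitively on $X$.
   Context: A $k$-hypergraph is a pair $(X,E)$ with $E$ a set of $k$-element subsets of $X$ (edges). It is set-homogeneous if for every $t\ge1$, whenever $U,V\subseteq X$ with $|U|=|V|=t$ carry isomorphic induced subhypergraphs there is $g\in\mathrm{Aut}(\Gamma)$ with $U^g=V$. 2-transitive means transitive on ordered pairs of distinct points. *)

theory Defs
  imports Main
begin

definition hypergraph :: "nat \<Rightarrow> 'a set \<Rightarrow> 'a set set \<Rightarrow> bool" where
  "hypergraph k X E \<longleftrightarrow> (\<forall>e\<in>E. e \<subseteq> X \<and> card e = k)"

definition induced_iso :: "'a set set \<Rightarrow> 'a set \<Rightarrow> 'a set \<Rightarrow> ('a \<Rightarrow> 'a) \<Rightarrow> bool" where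
  "induced_iso E U V f \<longleftrightarrow> bij_betw f U V \<and> (\<forall>e. e \<subseteq> U \<longrightarrow> (e \<in> E \<longleftrightarrow> f ` e \<in> E))"

definition induced_isomorphic :: "'a set set \<Rightarrow> 'a set \<Rightarrow> 'a set \<Rightarrow> bool" where
  "induced_isomorphic E U V \<longleftrightarrow> (\<exists>f. induced_iso E U V f)"

definition hg_aut :: "'a set \<Rightarrow> 'a set set \<Rightarrow> ('a \<Rightarrow> 'a) set" where
  "hg_aut X E = {g. induced_iso E X X g}"

definition set_homogeneous :: "'a set \<Rightarrow> 'a set set \<Rightarrow> bool" where
  "set_homogeneous X E \<longleftrightarrow>
     (\<forall>t\<ge>1. \<forall>U V. U \<subseteq> X \<and> V \<subseteq> X \<and> card U = t \<and> card V = t \<and> induced_isomorphic E U V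
        \<longrightarrow> (\<exists>g\<in>hg_aut X E. g ` U = V))"

definition two_transitive :: "'a set \<Rightarrow> ('a \<Rightarrow> 'a) set \<Rightarrow> bool" where
  "two_transitive X G \<longleftrightarrow>
     (\<forall>x\<in>X. \<forall>y\<in>X. \<forall>x'\<in>X. \<forall>y'\<in>X. x \<noteq> y \<and> x' \<noteq> y' \<longrightarrow> (\<exists>g\<in>G. g x = x' \<and> g y = y'))"

end

theory Submission
  imports Defs
begin

lemma aut_bij: "g \<in> hg_aut X E \<Longrightarrow> bij_betw g X X"
  by (simp add: hg_aut_def induced_iso_def)

lemma aut_edge: "g \<in> hg_aut X E \<Longrightarrow> e \<subseteq> X \<Longrightarrow> (e \<in> E \<longleftrightarrow> g ` e \<in> E)"
  by (simp add: hg_aut_def induced_iso_def)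

lemma aut_comp:
  assumes "g \<in> hg_aut X E" "h \<in> hg_aut X E" shows "g \<circ> h \<in> hg_aut X E"
proof -
  have b: "bij_betw (g \<circ> h) X X" using aut_bij[OF assms(1)] aut_bij[OF assms(2)] bij_betw_trans by blast
  have "\<forall>e. e \<subseteq> X \<longrightarrow> (e \<in> E \<longleftrightarrow> (g \<circ> h) ` e \<in> E)"
  proof (intro allI impI)
    fix e assume e: "e \<subseteq> X"
    have "h ` e \<subseteq> X" using e aut_bij[OF assms(2)] bij_betw_imp_surj_on by blast
    then show "e \<in> E \<longleftrightarrow> (g \<circ> h) ` e \<in> E"
      using aut_edge[OF assms(2) e] aut_edge[OF assms(1)] by (simp add: image_comp)
  qed
  with b show ?thesis by (simp add: hg_aut_def induced_iso_def)
qed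

lemma aut_inv:
  assumes "g \<in> hg_aut X E" shows "inv_into X g \<in> hg_aut X E"
proof -
  have bg: "bij_betw g X X" using aut_bij[OF assms] .
  have b: "bij_betw (inv_into X g) X X" using bij_betw_inv_into[OF bg] .
  have "\<forall>e. e \<subseteq> X \<longrightarrow> (e \<in> E \<longleftrightarrow> inv_into X g ` e \<in> E)"
  proof (intro allI impI)
    fix e assume e: "e \<subseteq> X"
    have s: "inv_into X g ` e \<subseteq> X" using e b bij_betw_imp_surj_on by blast
    have "g ` (inv_into X g ` e) = e"
      using e bg by (metis bij_betw_imp_surj_on image_inv_into_cancel)
    then show "e \<in> E \<longleftrightarrow> inv_into X g ` e \<in> E"
      using aut_edge[OF assms s] by simp
  qed
  with b show ?thesis by (simp add: hg_aut_def induced_iso_def)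
qed

lemma aut_inv_f: "g \<in> hg_aut X E \<Longrightarrow> x \<in> X \<Longrightarrow> inv_into X g (g x) = x"
  using aut_bij bij_betw_inv_into_left by fastforce

lemma aut_map: "g \<in> hg_aut X E \<Longrightarrow> x \<in> X \<Longrightarrow> g x \<in> X"
  using aut_bij bij_betwE by blast

lemma perm_aut:
  assumes "finite X" "hypergraph k X E" "card X \<le> k" "bij_betw g X X"
  shows "g \<in> hg_aut X E"
proof -
  have "\<forall>e. e \<subseteq> X \<longrightarrow> (e \<in> E \<longleftrightarrow> g ` e \<in> E)"
  proof (intro allI impI)
    fix e assume e: "e \<subseteq> X"
    have ge: "g ` e \<subseteq> X" using e assms(4) bij_betw_imp_surj_on by blast
    have inj: "inj_on g X" using assms(4) bij_betw_imp_inj_on by blast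
    have gX: "g ` X = X" using assms(4) bij_betw_imp_surj_on by blast
    have c1: "e \<in> E \<Longrightarrow> e = X"
      using assms(1,2,3) e unfolding hypergraph_def by (metis card_seteq)
    have c2: "g ` e \<in> E \<Longrightarrow> g ` e = X"
      using assms(1,2,3) ge unfolding hypergraph_def by (metis card_seteq)
    have c3: "g ` e = X \<Longrightarrow> e = X"
      using inj e gX by (metis inj_on_image_eq_iff order_refl)
    show "e \<in> E \<longleftrightarrow> g ` e \<in> E" using c1 c2 c3 gX by metis
  qed
  with assms(4) show ?thesis by (simp add: hg_aut_def induced_iso_def)
qed

lemma hom_small:
  assumes "hypergraph k X E" "set_homogeneous X E" "A \<subseteq> X" "B \<subseteq> X"
    "card A = t" "card B = t" "1 \<le> t" "t < k"
  shows "\<exists>g\<in>hg_aut X E. g ` A = B"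
proof -
  have fA: "finite A" "finite B" using assms(5,6,7) card.infinite by force+
  obtain f where f: "bij_betw f A B" using finite_same_card_bij[OF fA] assms(5,6) by auto
  have "\<forall>e. e \<subseteq> A \<longrightarrow> (e \<in> E \<longleftrightarrow> f ` e \<in> E)"
  proof (intro allI impI)
    fix e assume e: "e \<subseteq> A"
    have fe: "f ` e \<subseteq> B" using e f bij_betw_imp_surj_on by blast
    have "card e \<le> t" using e fA assms(5) card_mono by blast
    moreover have "card (f ` e) \<le> t" using fe fA assms(6) card_mono by blast
    ultimately show "e \<in> E \<longleftrightarrow> f ` e \<in> E" using assms(1,8) unfolding hypergraph_def by auto
  qed
  then have "induced_isomorphic E A B" using f unfolding induced_isomorphic_def induced_iso_def by blast
  then show ?thesis using assms(2,3,4,5,6,7) unfolding set_homogeneous_def by blast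
qed

lemma hom_eq:
  assumes "hypergraph k X E" "set_homogeneous X E" "A \<subseteq> X" "B \<subseteq> X"
    "card A = k" "card B = k" "1 \<le> k" "A \<in> E \<longleftrightarrow> B \<in> E"
  shows "\<exists>g\<in>hg_aut X E. g ` A = B"
proof -
  have fA: "finite A" "finite B" using assms(5,6,7) card.infinite by force+
  obtain f where f: "bij_betw f A B" using finite_same_card_bij[OF fA] assms(5,6) by auto
  have "\<forall>e. e \<subseteq> A \<longrightarrow> (e \<in> E \<longleftrightarrow> f ` e \<in> E)"
  proof (intro allI impI)
    fix e assume e: "e \<subseteq> A"
    show "e \<in> E \<longleftrightarrow> f ` e \<in> E"
    proof (cases "e = A")
      case True
      then show ?thesis using f assms(8) bij_betw_imp_surj_on by blast
    next
      case False
      have fe: "f ` e \<subseteq> B" using e f bij_betw_imp_surj_on by blast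
      have "card e < k" using e fA assms(5) False by (metis psubsetI psubset_card_mono)
      moreover have "card (f ` e) \<le> card e" using card_image_le fA(1) e finite_subset by blast
      ultimately show ?thesis using assms(1) unfolding hypergraph_def by auto
    qed
  qed
  then have "induced_isomorphic E A B" using f unfolding induced_isomorphic_def induced_iso_def by blast
  then show ?thesis using assms(2,3,4,5,6,7) unfolding set_homogeneous_def by blast
qed



lemma cyc_exists:
  fixes R :: "'a \<Rightarrow> 'a \<Rightarrow> bool"
  assumes fin: "finite S" and xy: "x0 \<in> S" "y0 \<in> S" "x0 \<noteq> y0"
    and tot: "\<forall>x\<in>S. \<forall>y\<in>S. x \<noteq> y \<longrightarrow> R x y \<or> R y x"
    and asym: "\<forall>x\<in>S. \<forall>y\<in>S. R x y \<longrightarrow> \<not> R y x"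
    and act: "\<forall>x\<in>S. \<forall>y\<in>S. \<exists>g. g x = y \<and> inj_on g S \<and> g ` S \<subseteq> S \<and>
                 (\<forall>u\<in>S. \<forall>w\<in>S. R u w \<longrightarrow> R (g u) (g w))"
  shows "\<exists>p\<in>S. \<exists>q\<in>S. \<exists>r\<in>S. R p q \<and> R q r \<and> R r p"
proof (rule ccontr)
  assume nc: "\<not> ?thesis"
  obtain x y where x: "x \<in> S" and y: "y \<in> S" and rxy: "R x y"
    using xy tot by blast
  define Out where "Out z = {w\<in>S. R z w}" for z
  have sub: "Out y \<subseteq> Out x"
  proof
    fix w assume "w \<in> Out y"
    then have w: "w \<in> S" "R y w" by (auto simp: Out_def)
    have "w \<noteq> x" using w x y rxy asym by blast
    then have "R x w" using nc tot w x y rxy by blast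
    then show "w \<in> Out x" using w by (simp add: Out_def)
  qed
  have "y \<in> Out x" "y \<notin> Out y" using y rxy asym by (auto simp: Out_def)
  then have ps: "Out y \<subset> Out x" using sub by blast
  have fO: "finite (Out z)" for z using fin by (simp add: Out_def)
  have lt: "card (Out y) < card (Out x)" using psubset_card_mono[OF fO ps] .
  obtain g where g: "g x = y" "inj_on g S" "g ` S \<subseteq> S"
    "\<forall>u\<in>S. \<forall>w\<in>S. R u w \<longrightarrow> R (g u) (g w)" using act x y by blast
  have "g ` Out x \<subseteq> Out y" using g x by (auto simp: Out_def)
  moreover have "card (g ` Out x) = card (Out x)"
    using g(2) by (intro card_image) (auto simp: Out_def intro: inj_on_subset)
  ultimately have "card (Out x) \<le> card (Out y)" using card_mono[OF fO] by metis
  with lt show False by simp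
qed

lemma swap_two_trans:
  assumes hg: "hypergraph k X E" and sh: "set_homogeneous X E" and k: "k \<ge> 3"
    and sw: "\<forall>x\<in>X. \<forall>y\<in>X. x \<noteq> y \<longrightarrow> (\<exists>g\<in>hg_aut X E. g x = y \<and> g y = x)"
  shows "two_transitive X (hg_aut X E)"
  unfolding two_transitive_def
proof (intro ballI impI)
  fix x y x' y' assume X: "x \<in> X" "y \<in> X" "x' \<in> X" "y' \<in> X" and ne: "x \<noteq> y \<and> x' \<noteq> y'"
  obtain g where g: "g \<in> hg_aut X E" "g ` {x,y} = {x',y'}"
    using hom_small[OF hg sh, of "{x,y}" "{x',y'}" 2] X ne k by auto
  have m: "g x \<in> {x',y'}" "g y \<in> {x',y'}" "x' \<in> g ` {x,y}" "y' \<in> g ` {x,y}"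
    using g(2) by blast+
  show "\<exists>g\<in>hg_aut X E. g x = x' \<and> g y = y'"
  proof (cases "g x = x'")
    case True
    then have "g y = y'" using m ne by auto
    then show ?thesis using True g(1) by blast
  next
    case False
    then have gx: "g x = y'" "g y = x'" using m ne by auto
    obtain s where s: "s \<in> hg_aut X E" "s x' = y'" "s y' = x'" using sw X ne by blast
    have "(s \<circ> g) x = x'" "(s \<circ> g) y = y'" using gx s by auto
    then show ?thesis using aut_comp[OF s(1) g(1)] by blast
  qed
qed



locale ns =
  fixes X :: "'a set" and E :: "'a set set" and k :: nat and a b :: 'a
  assumes fin: "finite X" and hg: "hypergraph k X E" and sh: "set_homogeneous X E"
    and k3: "k \<ge> 3" and big: "k < card X" and aX: "a \<in> X" and bX: "b \<in> X" and ab: "a \<noteq> b"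
    and nosw: "\<not> (\<exists>g\<in>hg_aut X E. g a = b \<and> g b = a)"
begin

definition arc where "arc x y \<longleftrightarrow> (\<exists>g\<in>hg_aut X E. g a = x \<and> g b = y)"

lemma arc_X: "arc x y \<Longrightarrow> x \<in> X \<and> y \<in> X \<and> x \<noteq> y"
proof -
  assume "arc x y"
  then obtain g where g: "g \<in> hg_aut X E" "g a = x" "g b = y" unfolding arc_def by blast
  have inj: "inj_on g X" using aut_bij[OF g(1)] bij_betw_imp_inj_on by blast
  have "g a \<noteq> g b" using inj_on_contraD[OF inj ab aX bX] .
  then show ?thesis using g aut_map[OF g(1)] aX bX by auto
qed

lemma arc_tot: "x \<in> X \<Longrightarrow> y \<in> X \<Longrightarrow> x \<noteq> y \<Longrightarrow> arc x y \<or> arc y x"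
proof -
  assume X: "x \<in> X" "y \<in> X" "x \<noteq> y"
  obtain g where g: "g \<in> hg_aut X E" "g ` {a,b} = {x,y}"
    using hom_small[OF hg sh, of "{a,b}" "{x,y}" 2] X aX bX ab k3 by auto
  have m: "g a \<in> {x,y}" "g b \<in> {x,y}" "x \<in> g ` {a,b}" "y \<in> g ` {a,b}"
    using g(2) by blast+
  then have "(g a = x \<and> g b = y) \<or> (g a = y \<and> g b = x)" using X by auto
  then show ?thesis using g(1) unfolding arc_def by blast
qed

lemma arc_asym: "arc x y \<Longrightarrow> \<not> arc y x"
proof
  assume "arc x y" "arc y x"
  then obtain g h where g: "g \<in> hg_aut X E" "g a = x" "g b = y"
    and h: "h \<in> hg_aut X E" "h a = y" "h b = x" unfolding arc_def by blast
  have "(inv_into X g \<circ> h) a = b" "(inv_into X g \<circ> h) b = a"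
    using g h aut_inv_f aX bX by fastforce+
  then show False using nosw aut_comp[OF aut_inv[OF g(1)] h(1)] by blast
qed

lemma arc_pres: "g \<in> hg_aut X E \<Longrightarrow> arc x y \<Longrightarrow> arc (g x) (g y)"
proof -
  assume g: "g \<in> hg_aut X E" "arc x y"
  then obtain h where h: "h \<in> hg_aut X E" "h a = x" "h b = y" unfolding arc_def by blast
  have "(g \<circ> h) a = g x" "(g \<circ> h) b = g y" using h by auto
  then show ?thesis using aut_comp[OF g(1) h(1)] unfolding arc_def by blast
qed

lemma arc_act: "arc x y \<Longrightarrow> arc x' y' \<Longrightarrow> \<exists>g\<in>hg_aut X E. g x = x' \<and> g y = y'"
proof -
  assume "arc x y" "arc x' y'"
  then obtain g h where g: "g \<in> hg_aut X E" "g a = x" "g b = y"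
    and h: "h \<in> hg_aut X E" "h a = x'" "h b = y'" unfolding arc_def by blast
  have "(h \<circ> inv_into X g) x = x'" "(h \<circ> inv_into X g) y = y'"
    using g h aut_inv_f aX bX by fastforce+
  then show ?thesis using aut_comp[OF h(1) aut_inv[OF g(1)]] by blast
qed

lemma vtrans: "x \<in> X \<Longrightarrow> y \<in> X \<Longrightarrow> \<exists>g\<in>hg_aut X E. g x = y"
  using hom_small[OF hg sh, of "{x}" "{y}" 1] k3 by auto

lemma cyc_in:
  assumes S: "S \<subseteq> X" "x0 \<in> S" "y0 \<in> S" "x0 \<noteq> y0"
    and act: "\<forall>x\<in>S. \<forall>y\<in>S. \<exists>g\<in>hg_aut X E. g x = y \<and> g ` S \<subseteq> S"
  shows "\<exists>p\<in>S. \<exists>q\<in>S. \<exists>r\<in>S. arc p q \<and> arc q r \<and> arc r p"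
proof (rule cyc_exists[of S x0 y0 arc])
  show "finite S" using S fin finite_subset by blast
  show "\<forall>x\<in>S. \<forall>y\<in>S. x \<noteq> y \<longrightarrow> arc x y \<or> arc y x" using arc_tot S by blast
  show "\<forall>x\<in>S. \<forall>y\<in>S. arc x y \<longrightarrow> \<not> arc y x" using arc_asym by blast
  show "\<forall>x\<in>S. \<forall>y\<in>S. \<exists>g. g x = y \<and> inj_on g S \<and> g ` S \<subseteq> S \<and>
                 (\<forall>u\<in>S. \<forall>w\<in>S. arc u w \<longrightarrow> arc (g u) (g w))"
  proof (intro ballI)
    fix x y assume "x \<in> S" "y \<in> S"
    then obtain g where g: "g \<in> hg_aut X E" "g x = y" "g ` S \<subseteq> S" using act by blast
    have "inj_on g S" using aut_bij[OF g(1)] S(1) bij_betw_imp_inj_on inj_on_subset by blast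
    then show "\<exists>g. g x = y \<and> inj_on g S \<and> g ` S \<subseteq> S \<and>
                 (\<forall>u\<in>S. \<forall>w\<in>S. arc u w \<longrightarrow> arc (g u) (g w))"
      using g arc_pres by blast
  qed
qed (use S in auto)

definition Out where "Out v = {w\<in>X. arc v w}"
definition In where "In v = {w\<in>X. arc w v}"

lemma out_le: "g \<in> hg_aut X E \<Longrightarrow> card (Out v) \<le> card (Out (g v))"
proof -
  assume g: "g \<in> hg_aut X E"
  have sub: "g ` Out v \<subseteq> Out (g v)" using g arc_pres aut_map by (auto simp: Out_def)
  have inj: "inj_on g (Out v)"
  proof (rule inj_on_subset)
    show "inj_on g X" using aut_bij[OF g] bij_betw_imp_inj_on by blast
    show "Out v \<subseteq> X" by (auto simp: Out_def)
  qed
  have fi: "finite (Out w)" for w using fin by (simp add: Out_def)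
  have "card (g ` Out v) = card (Out v)" using card_image[OF inj] .
  moreover have "card (g ` Out v) \<le> card (Out (g v))" using card_mono[OF fi sub] .
  ultimately show ?thesis by simp
qed

lemma in_le: "g \<in> hg_aut X E \<Longrightarrow> card (In v) \<le> card (In (g v))"
proof -
  assume g: "g \<in> hg_aut X E"
  have sub: "g ` In v \<subseteq> In (g v)" using g arc_pres aut_map by (auto simp: In_def)
  have inj: "inj_on g (In v)"
  proof (rule inj_on_subset)
    show "inj_on g X" using aut_bij[OF g] bij_betw_imp_inj_on by blast
    show "In v \<subseteq> X" by (auto simp: In_def)
  qed
  have fi: "finite (In w)" for w using fin by (simp add: In_def)
  have "card (g ` In v) = card (In v)" using card_image[OF inj] .
  moreover have "card (g ` In v) \<le> card (In (g v))" using card_mono[OF fi sub] .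
  ultimately show ?thesis by simp
qed

lemma out_const: "v \<in> X \<Longrightarrow> card (Out v) = card (Out a)"
proof -
  assume v: "v \<in> X"
  obtain g where g: "g \<in> hg_aut X E" "g v = a" using vtrans[OF v aX] by (elim bexE)
  obtain h where h: "h \<in> hg_aut X E" "h a = v" using vtrans[OF aX v] by (elim bexE)
  note gh = g h
  have "card (Out v) \<le> card (Out a)" "card (Out a) \<le> card (Out v)"
    using out_le[OF gh(1), of v] out_le[OF gh(3), of a] gh(2,4) by simp_all
  then show ?thesis by simp
qed

lemma in_const: "v \<in> X \<Longrightarrow> card (In v) = card (In a)"
proof -
  assume v: "v \<in> X"
  obtain g where g: "g \<in> hg_aut X E" "g v = a" using vtrans[OF v aX] by (elim bexE)
  obtain h where h: "h \<in> hg_aut X E" "h a = v" using vtrans[OF aX v] by (elim bexE)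
  note gh = g h
  have "card (In v) \<le> card (In a)" "card (In a) \<le> card (In v)"
    using in_le[OF gh(1), of v] in_le[OF gh(3), of a] gh(2,4) by simp_all
  then show ?thesis by simp
qed

lemma card_filter_sum: "finite A \<Longrightarrow> card {w\<in>A. P w} = (\<Sum>w\<in>A. if P w then 1 else 0)"
  unfolding card_eq_sum by (rule sum.inter_filter)

lemma balance: "card (Out a) = card (In a)"
proof -
  have "(\<Sum>v\<in>X. card (Out v)) = (\<Sum>v\<in>X. \<Sum>w\<in>X. if arc v w then 1 else 0)"
    unfolding Out_def by (intro sum.cong refl card_filter_sum[OF fin])
  also have "\<dots> = (\<Sum>w\<in>X. \<Sum>v\<in>X. if arc v w then 1 else 0)" by (rule sum.swap)
  also have "\<dots> = (\<Sum>w\<in>X. card (In w))"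
    unfolding In_def by (intro sum.cong refl card_filter_sum[OF fin, symmetric])
  finally have "(\<Sum>v\<in>X. card (Out v)) = (\<Sum>w\<in>X. card (In w))" .
  moreover have "(\<Sum>v\<in>X. card (Out v)) = (\<Sum>v\<in>X. card (Out a))"
    by (rule sum.cong[OF refl]) (rule out_const)
  then have "(\<Sum>v\<in>X. card (Out v)) = card X * card (Out a)" by simp
  moreover have "(\<Sum>v\<in>X. card (In v)) = (\<Sum>v\<in>X. card (In a))"
    by (rule sum.cong[OF refl]) (rule in_const)
  then have "(\<Sum>v\<in>X. card (In v)) = card X * card (In a)" by simp
  ultimately show ?thesis using big by simp
qed

lemma deg_sum: "card (Out a) + card (In a) + 1 = card X"
proof -
  have s1: "Out a \<union> In a \<subseteq> X - {a}" unfolding Out_def In_def using arc_X by blast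
  have s2: "X - {a} \<subseteq> Out a \<union> In a" unfolding Out_def In_def using arc_tot aX by blast
  have "Out a \<union> In a = X - {a}" using s1 s2 by (rule equalityI)
  moreover have d: "Out a \<inter> In a = {}" unfolding Out_def In_def using arc_asym by blast
  moreover have f: "finite (Out a)" "finite (In a)" using fin by (simp_all add: Out_def In_def)
  ultimately have "card (Out a) + card (In a) = card (X - {a})"
    using card_Un_disjoint[OF f d] by simp
  moreover have "card (X - {a}) = card X - 1" using card_Diff_singleton[OF aX] .
  moreover have "card X > 0" using big by linarith
  ultimately show ?thesis by linarith
qed

lemma deg2: "v \<in> X \<Longrightarrow> card (Out v) \<ge> 2 \<and> card (In v) \<ge> 2"
proof -
  assume v: "v \<in> X"
  have "card (Out a) + card (Out a) + 1 = card X" using deg_sum balance by simp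
  then have "card (Out a) \<ge> 2" using big k3 by simp
  then show ?thesis using out_const[OF v] in_const[OF v] balance by simp
qed

end


context ns begin

definition cyc where "cyc x y z \<longleftrightarrow> (arc x y \<and> arc y z \<and> arc z x) \<or> (arc x z \<and> arc z y \<and> arc y x)"

lemma cyc_perm:
  assumes "{u,v,w} = {x,y,z}" "x \<noteq> y" "y \<noteq> z" "x \<noteq> z" "cyc u v w"
  shows "cyc x y z"
proof -
  have "u \<noteq> v" "v \<noteq> w" "u \<noteq> w" using assms(5) arc_X unfolding cyc_def by blast+
  moreover have "x \<in> {u,v,w}" "y \<in> {u,v,w}" "z \<in> {u,v,w}" using assms(1) by blast+
  ultimately show ?thesis using assms(2-5) unfolding cyc_def by auto
qed

lemma cyc_img:
  assumes g: "g \<in> hg_aut X E" and X: "x \<in> X" "y \<in> X" "z \<in> X"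
    and d: "x' \<noteq> y'" "y' \<noteq> z'" "x' \<noteq> z'" and im: "g ` {x,y,z} = {x',y',z'}"
    and c: "cyc x y z"
  shows "cyc x' y' z'"
proof -
  have "cyc (g x) (g y) (g z)" using c arc_pres[OF g] unfolding cyc_def by blast
  then show ?thesis using cyc_perm[of "g x" "g y" "g z" x' y' z'] im d by simp
qed

lemma cyc_iff:
  assumes g: "g \<in> hg_aut X E" and X: "x \<in> X" "y \<in> X" "z \<in> X"
    and X': "x' \<in> X" "y' \<in> X" "z' \<in> X"
    and d: "x \<noteq> y" "y \<noteq> z" "x \<noteq> z" "x' \<noteq> y'" "y' \<noteq> z'" "x' \<noteq> z'"
    and im: "g ` {x,y,z} = {x',y',z'}"
  shows "cyc x y z \<longleftrightarrow> cyc x' y' z'"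
proof
  show "cyc x y z \<Longrightarrow> cyc x' y' z'" using cyc_img[OF g X d(4-6) im] .
  have inj: "inj_on g X" using aut_bij[OF g] bij_betw_imp_inj_on by blast
  have "inv_into X g ` {x',y',z'} = {x,y,z}"
    using im inv_into_image_cancel[OF inj, of "{x,y,z}"] X by simp
  then show "cyc x' y' z' \<Longrightarrow> cyc x y z" using cyc_img[OF aut_inv[OF g] X' d(1-3)] by simp
qed

lemma card3: "x \<noteq> y \<Longrightarrow> y \<noteq> z \<Longrightarrow> x \<noteq> z \<Longrightarrow> card {x,y,z} = 3"
  by simp

lemma noncyc: "arc x y \<Longrightarrow> arc x z \<Longrightarrow> \<not> cyc x y z"
  unfolding cyc_def using arc_asym by blast

lemma noncyc': "arc y x \<Longrightarrow> arc z x \<Longrightarrow> \<not> cyc x y z"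
  unfolding cyc_def using arc_asym by blast

lemma twoelts: "card S \<ge> 2 \<Longrightarrow> \<exists>x\<in>S. \<exists>y\<in>S. x \<noteq> y"
proof (rule ccontr)
  assume c: "card S \<ge> 2" and n: "\<not> (\<exists>x\<in>S. \<exists>y\<in>S. x \<noteq> y)"
  have f: "finite S" using c card.infinite by force
  have "card S \<le> Suc 0" using card_le_Suc0_iff_eq[OF f] n by blast
  with c show False by simp
qed

lemma main: False
proof -
  obtain x0 y0 where o: "x0 \<in> Out a" "y0 \<in> Out a" "x0 \<noteq> y0" using deg2[OF aX] twoelts by blast
  then have ox: "arc a x0" "arc a y0" by (auto simp: Out_def)
  have acta: "\<forall>x\<in>Out a. \<forall>y\<in>Out a. \<exists>g\<in>hg_aut X E. g x = y \<and> g ` Out a \<subseteq> Out a"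
  proof (intro ballI)
    fix x y assume "x \<in> Out a" "y \<in> Out a"
    then obtain g where g: "g \<in> hg_aut X E" "g a = a" "g x = y"
      using arc_act[of a x a y] by (auto simp: Out_def)
    have "g ` Out a \<subseteq> Out a"
    proof
      fix z assume "z \<in> g ` Out a"
      then obtain w where w: "w \<in> Out a" "z = g w" by blast
      then have aw: "arc a w" "w \<in> X" by (auto simp: Out_def)
      have "arc (g a) (g w)" using arc_pres[OF g(1) aw(1)] .
      then show "z \<in> Out a" using w(2) g(2) aut_map[OF g(1) aw(2)] by (simp add: Out_def)
    qed
    then show "\<exists>g\<in>hg_aut X E. g x = y \<and> g ` Out a \<subseteq> Out a" using g by blast
  qed
  obtain p1 q1 r1 where c1: "p1 \<in> Out a" "q1 \<in> Out a" "r1 \<in> Out a" "arc p1 q1" "arc q1 r1" "arc r1 p1"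
    using cyc_in[of "Out a" x0 y0] o acta by (auto simp: Out_def)
  obtain u0 w0 where i: "u0 \<in> In a" "w0 \<in> In a" "u0 \<noteq> w0" using deg2[OF aX] twoelts by blast
  have acti: "\<forall>x\<in>In a. \<forall>y\<in>In a. \<exists>g\<in>hg_aut X E. g x = y \<and> g ` In a \<subseteq> In a"
  proof (intro ballI)
    fix x y assume "x \<in> In a" "y \<in> In a"
    then obtain g where g: "g \<in> hg_aut X E" "g a = a" "g x = y"
      using arc_act[of x a y a] by (auto simp: In_def)
    have "g ` In a \<subseteq> In a"
    proof
      fix z assume "z \<in> g ` In a"
      then obtain w where w: "w \<in> In a" "z = g w" by blast
      then have aw: "arc w a" "w \<in> X" by (auto simp: In_def)
      have "arc (g w) (g a)" using arc_pres[OF g(1) aw(1)] .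
      then show "z \<in> In a" using w(2) g(2) aut_map[OF g(1) aw(2)] by (simp add: In_def)
    qed
    then show "\<exists>g\<in>hg_aut X E. g x = y \<and> g ` In a \<subseteq> In a" using g by blast
  qed
  obtain p2 q2 r2 where c2: "p2 \<in> In a" "q2 \<in> In a" "r2 \<in> In a" "arc p2 q2" "arc q2 r2" "arc r2 p2"
    using cyc_in[of "In a" u0 w0] i acti by (auto simp: In_def)
  have a1: "arc a p1" "arc a q1" "arc a r1" using c1 by (auto simp: Out_def)
  have a2: "arc p2 a" "arc q2 a" "arc r2 a" using c2 by (auto simp: In_def)
  have X1: "p1 \<in> X" "q1 \<in> X" "r1 \<in> X" "p2 \<in> X" "q2 \<in> X" "r2 \<in> X"
    using a1 a2 arc_X by blast+
  have d1: "p1 \<noteq> q1" "q1 \<noteq> r1" "p1 \<noteq> r1" "a \<noteq> p1" "a \<noteq> q1" "a \<noteq> r1"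
    using c1 a1 arc_X arc_asym by metis+
  have d2: "p2 \<noteq> q2" "q2 \<noteq> r2" "p2 \<noteq> r2" "a \<noteq> p2" "a \<noteq> q2" "a \<noteq> r2"
    using c2 a2 arc_X arc_asym by metis+
  have cy1: "cyc p1 q1 r1" using c1 unfolding cyc_def by blast
  have ncy1: "\<not> cyc a p1 q1" using noncyc a1 by blast
  show False
  proof (cases "k = 3")
    case False
    then have k4: "k > 3" using k3 by simp
    obtain g where g: "g \<in> hg_aut X E" "g ` {p1,q1,r1} = {a,p1,q1}"
      using hom_small[OF hg sh, of "{p1,q1,r1}" "{a,p1,q1}" 3] X1 aX d1 k4 by auto
    show False using cyc_img[OF g(1) X1(1-3) _ _ _ g(2) cy1] d1 ncy1 by blast
  next
    case True
    define c where "c = ({p1,q1,r1} \<in> E)"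
    have F1: "cyc x y z" if h: "x \<in> X" "y \<in> X" "z \<in> X" "x \<noteq> y" "y \<noteq> z" "x \<noteq> z"
      "({x,y,z} \<in> E) = c" for x y z
    proof -
      obtain g where g: "g \<in> hg_aut X E" "g ` {p1,q1,r1} = {x,y,z}"
        using hom_eq[OF hg sh, of "{p1,q1,r1}" "{x,y,z}"] X1 h d1 True c_def by auto
      show ?thesis using cyc_img[OF g(1) X1(1-3) _ _ _ g(2) cy1] h by blast
    qed
    have T0: "({a,p1,q1} \<in> E) \<noteq> c" using F1[of a p1 q1] aX X1 d1 ncy1 by blast
    have F2: "\<not> cyc x y z" if h: "x \<in> X" "y \<in> X" "z \<in> X" "x \<noteq> y" "y \<noteq> z" "x \<noteq> z"
      "({x,y,z} \<in> E) \<noteq> c" for x y z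
    proof -
      obtain g where g: "g \<in> hg_aut X E" "g ` {a,p1,q1} = {x,y,z}"
        using hom_eq[OF hg sh, of "{a,p1,q1}" "{x,y,z}"] X1 aX h d1 True T0 by auto
      have "cyc a p1 q1 \<longleftrightarrow> cyc x y z"
        using cyc_iff[OF g(1) aX X1(1,2) h(1-3) _ _ _ h(4-6) g(2)] d1 by blast
      then show ?thesis using ncy1 by blast
    qed
    have F: "({x,y,z} \<in> E) \<longleftrightarrow> (cyc x y z \<longleftrightarrow> c)"
      if "x \<in> X" "y \<in> X" "z \<in> X" "x \<noteq> y" "y \<noteq> z" "x \<noteq> z" for x y z
      using F1[OF that] F2[OF that] by blast
    define U where "U = {a,p1,q1,r1}"
    define V where "V = {a,p2,q2,r2}"
    define f where "f z = (if z = a then a else if z = p1 then p2 else if z = q1 then q2 else r2)" for z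
    have fv: "f a = a" "f p1 = p2" "f q1 = q2" "f r1 = r2" using d1 by (auto simp: f_def)
    have fU: "f ` U = V" using fv by (simp add: U_def V_def)
    have cU: "card U = 4" using d1 by (simp add: U_def)
    have cV: "card V = 4" using d2 by (simp add: V_def)
    have injf: "inj_on f U" using fU cU cV by (metis U_def eq_card_imp_inj_on finite.emptyI finite.insertI)
    have bij: "bij_betw f U V" using injf fU by (simp add: bij_betw_def)
    have UX: "U \<subseteq> X" "V \<subseteq> X" using aX X1 by (auto simp: U_def V_def)
    have cy2: "cyc p2 q2 r2" using c2 unfolding cyc_def by blast
    have edge: "e \<in> E \<longleftrightarrow> f ` e \<in> E" if e: "e \<subseteq> U" for e
    proof (cases "card e = 3")
      case False
      have "card (f ` e) = card e" using card_image[OF inj_on_subset[OF injf e]] .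
      then show ?thesis using False hg True unfolding hypergraph_def by auto
    next
      case c3: True
      have fe: "finite e" using finite_subset[OF e] by (simp add: U_def)
      have "card (U - e) = card U - card e" using card_Diff_subset[OF fe e] .
      then have "card (U - e) = 1" using c3 cU by simp
      then obtain z where z: "U - e = {z}" using card_1_singletonE by blast
      have ez: "e = U - {z}" "z \<in> U" using z e by blast+
      then have "z = a \<or> z = p1 \<or> z = q1 \<or> z = r1" by (simp add: U_def)
      then show ?thesis
      proof (elim disjE)
        assume zz: "z = a"
        have e1: "e = {p1,q1,r1}" using ez(1) zz d1 unfolding U_def by auto
        then have "f ` e = {p2,q2,r2}" using fv by simp
        note e1 this
        then show ?thesis using F[of p1 q1 r1] F[of p2 q2 r2] X1 d1 d2 cy1 cy2 by simp
      next
        assume zz: "z = p1"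
        have e1: "e = {a,q1,r1}" using ez(1) zz d1 unfolding U_def by auto
        then have "f ` e = {a,q2,r2}" using fv by simp
        note e1 this
        then show ?thesis using F[of a q1 r1] F[of a q2 r2] X1 aX d1 d2
            noncyc[of a q1 r1] noncyc'[of q2 a r2] a1 a2 by simp
      next
        assume zz: "z = q1"
        have e1: "e = {a,p1,r1}" using ez(1) zz d1 unfolding U_def by auto
        then have "f ` e = {a,p2,r2}" using fv by simp
        note e1 this
        then show ?thesis using F[of a p1 r1] F[of a p2 r2] X1 aX d1 d2
            noncyc[of a p1 r1] noncyc'[of p2 a r2] a1 a2 by simp
      next
        assume zz: "z = r1"
        have e1: "e = {a,p1,q1}" using ez(1) zz d1 unfolding U_def by auto
        then have "f ` e = {a,p2,q2}" using fv by simp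
        note e1 this
        then show ?thesis using F[of a p1 q1] F[of a p2 q2] X1 aX d1 d2
            noncyc[of a p1 q1] noncyc'[of p2 a q2] a1 a2 by simp
      qed
    qed
    have "induced_isomorphic E U V"
      unfolding induced_isomorphic_def induced_iso_def using bij edge by blast
    then have "\<exists>g\<in>hg_aut X E. g ` U = V"
      using sh[unfolded set_homogeneous_def, rule_format, of 4 U V] UX cU cV by simp
    then obtain g where g: "g \<in> hg_aut X E" "g ` U = V" by blast
    have gaV: "g a \<in> V" using g(2) by (auto simp: U_def)
    have out: "arc (g a) y" if hy: "y \<in> V" "y \<noteq> g a" for y
    proof -
      obtain x where x: "x \<in> U" "y = g x" using hy g(2) by blast
      have "x \<noteq> a" using x hy by blast
      then have "arc a x" using x a1 by (auto simp: U_def)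
      then show ?thesis using arc_pres[OF g(1)] x by blast
    qed
    have "g a = a \<or> g a = p2 \<or> g a = q2 \<or> g a = r2" using gaV by (simp add: V_def)
    then show False
    proof (elim disjE)
      assume h: "g a = a" show False using out[of p2] h d2 a2 arc_asym by (auto simp: V_def)
    next
      assume h: "g a = p2" show False using out[of r2] h d2 c2 arc_asym by (auto simp: V_def)
    next
      assume h: "g a = q2" show False using out[of p2] h d2 c2 arc_asym by (auto simp: V_def)
    next
      assume h: "g a = r2" show False using out[of q2] h d2 c2 arc_asym by (auto simp: V_def)
    qed
  qed
qed

end


theorem lemma5p1:
  fixes X :: "'a set" and E :: "'a set set" and k :: nat
  assumes "k \<ge> 3" and "finite X" and "hypergraph k X E" and "set_homogeneous X E"
  shows "two_transitive X (hg_aut X E)"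
proof (rule swap_two_trans[OF assms(3) assms(4) assms(1)])
  show "\<forall>x\<in>X. \<forall>y\<in>X. x \<noteq> y \<longrightarrow> (\<exists>g\<in>hg_aut X E. g x = y \<and> g y = x)"
  proof (intro ballI impI, rule ccontr)
    fix x y assume xy: "x \<in> X" "y \<in> X" "x \<noteq> y" and n: "\<not> (\<exists>g\<in>hg_aut X E. g x = y \<and> g y = x)"
    show False
    proof (cases "card X \<le> k")
      case True
      define s where "s z = (if z = x then y else if z = y then x else z)" for z
      have ss: "s (s z) = z" for z by (simp add: s_def)
      have sX: "s z \<in> X" if "z \<in> X" for z using that xy by (simp add: s_def)
      have "bij_betw s X X" by (rule bij_betw_byWitness[where f' = s]) (auto simp: ss sX)
      then have "s \<in> hg_aut X E" using perm_aut[OF assms(2,3) True] by blast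
      moreover have "s x = y" "s y = x" using xy by (auto simp: s_def)
      ultimately show False using n by blast
    next
      case False
      interpret ns X E k x y
        by unfold_locales (use assms xy n False in auto)
      show False by (rule main)
    qed
  qed
qed


end
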